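(* Let $M>0$. Then: (i) $\beta_M(x)\le0$ for every $x\in S$; (ii) if $\bar x\in S$ is not a stationary point, then $\beta_M(\bar x)<0$ and $d_M(\bar x)\ne0$; (iii) if $\beta_M(\bar x)=0$ for some $\bar x\in S$, then $\bar x$ is a stationary point.
   Context: Setting: $S\subseteq\mathbb{R}^n$ is a nonempty closed convex set with nonempty interior, $K\subset\mathbb{R}^p$ is a pointed closed convex cone, $f=(f_1,\dots,f_p)^\top:S\to\mathbb{R}^p$ is twice continuously differentiable, with Jacobian $Jf(x)$ ($p\times n$). With $K^*=\{u:\langle u,\xi\rangle\ge0\ \forall\xi\in K\}$, there is a finite set $C\subset K^*$ of unit vectors with $\mathrm{cone}(\mathrm{conv}(C))=K^*$ (so $\mathrm{int}(K)=\{u:\langle u,\xi\rangle>0\ \forall\xi\in C\}$). A point $\bar x\in S$ is stationary (Pareto critical) if $R(Jf(\bar x))\cap(-\mathrm{int}(K))=\emptyset$, where $R(Jf(\bar x))$ is the range of $Jf(\bar x)$. Notation: $\langle Jf(x)d,\xi\rangle=\sum_i\xi_i\nabla f_i(x)^\top d$, $\langle d^\top\nabla^2f(x)d,\xi\rangle=\sum_i\xi_i d^\top\nabla^2 f_i(x)d$. For $x\in S$: $q_M(x,d)=\max_{\xi\in C}\{\langle Jf(x)d,\xi\rangle+\tfrac12\langle d^\top\nabla^2f(x)d,\xi\rangle\}+\tfrac M6\|d\|^3$, $d_M(x)$ a (fixed) global minimizer of $q_M(x,\cdot)$ over $\mathbb{R}^n$, and $\beta_M(x)=\min_{d\in\mathbb{R}^n}q_M(x,d)$.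 *)

theory Defs
  imports "HOL-Analysis.Analysis"
begin

(* Dual cone K^* = {u. <u,xi> >= 0 for all xi in K} *)
definition dual_cone :: "(real^'p) set \<Rightarrow> (real^'p) set" where
  "dual_cone K = {u. \<forall>\<xi>\<in>K. u \<bullet> \<xi> \<ge> 0}"

(* pointed closed convex cone *)
definition pointed_closed_convex_cone :: "(real^'p) set \<Rightarrow> bool" where
  "pointed_closed_convex_cone K \<longleftrightarrow>
     K \<noteq> {} \<and> cone K \<and> convex K \<and> closed K \<and> K \<inter> uminus ` K = {0}"

(* Jf x :: real^'n^'p is the Jacobian (p x n); its i-th row is grad f_i(x).
   Hf x i :: real^'n^'n is the Hessian of f_i at x. *)

(* q_M(x,d) *)
definition qM :: "(real^'n \<Rightarrow> real^'n^'p) \<Rightarrow> (real^'n \<Rightarrow> 'p \<Rightarrow> real^'n^'n)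
    \<Rightarrow> (real^'p) set \<Rightarrow> real \<Rightarrow> real^'n \<Rightarrow> real^'n \<Rightarrow> real" where
  "qM Jf Hf C M x d =
     Max ((\<lambda>\<xi>. (Jf x *v d) \<bullet> \<xi> + 1/2 * (\<Sum>i\<in>UNIV. \<xi> $ i * (d \<bullet> (Hf x i *v d)))) ` C)
     + M / 6 * norm d ^ 3"

(* beta_M(x) = min_d q_M(x,d) *)
definition betaM :: "(real^'n \<Rightarrow> real^'n^'p) \<Rightarrow> (real^'n \<Rightarrow> 'p \<Rightarrow> real^'n^'n)
    \<Rightarrow> (real^'p) set \<Rightarrow> real \<Rightarrow> real^'n \<Rightarrow> real" where
  "betaM Jf Hf C M x = (INF d. qM Jf Hf C M x d)"

(* Pareto critical: R(Jf(x)) \<inter> (- int K) = {} *)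
definition stationary :: "(real^'n \<Rightarrow> real^'n^'p) \<Rightarrow> (real^'p) set \<Rightarrow> real^'n \<Rightarrow> bool" where
  "stationary Jf K x \<longleftrightarrow> range (\<lambda>d. Jf x *v d) \<inter> uminus ` interior K = {}"

end

theory Submission
  imports Defs
begin

lemma cubic_lb:
  fixes a b c :: real
  assumes "a \<ge> 0" "b \<ge> 0" "c > 0"
  shows "\<exists>m. \<forall>t\<ge>0. m \<le> - a * t - b * t^2 + c * t^3"
proof -
  define T where "T = max 1 ((a+b)/c)"
  have T1: "T \<ge> 1" unfolding T_def by simp
  have "(a+b)/c \<le> T" unfolding T_def by simp
  hence Tc: "c * T \<ge> a + b" using assms(3) by (simp add: pos_divide_le_eq mult.commute)
  show ?thesis
  proof (intro exI allI impI)
    fix t :: real assume t: "t \<ge> 0"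
    show "- a * T - b * T^2 \<le> - a * t - b * t^2 + c * t^3"
    proof (cases "t \<le> T")
      case True
      have "a * t \<le> a * T" using True assms by (simp add: mult_left_mono)
      moreover have "t^2 \<le> T^2" using True t by (simp add: power_mono)
      hence "b * t^2 \<le> b * T^2" using assms by (simp add: mult_left_mono)
      moreover have "c * t^3 \<ge> 0" using t assms by simp
      ultimately show ?thesis by linarith
    next
      case False
      hence tT: "T \<le> t" by simp
      hence "c * T \<le> c * t" using assms(3) by (simp add: mult_left_mono)
      hence t1: "t \<ge> 1" "c * t \<ge> a + b" using T1 Tc tT by linarith+
      have "a * t + b * t^2 \<le> (a + b) * t^2"
        using t1 assms by (simp add: algebra_simps power2_eq_square mult_left_mono)
      also have "\<dots> \<le> (c * t) * t^2" using t1 by (simp add: mult_right_mono)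
      also have "\<dots> = c * t^3" by (simp add: power2_eq_square power3_eq_cube)
      finally have "a * t + b * t^2 \<le> c * t^3" .
      moreover have "a * T + b * T^2 \<ge> 0" using T1 assms by simp
      ultimately show ?thesis by linarith
    qed
  qed
qed

lemma quad_bound:
  fixes H :: "'p::finite \<Rightarrow> real^'n::finite^'n" and \<xi> :: "real^'p"
  shows "\<bar>\<Sum>i\<in>UNIV. \<xi> $ i * (d \<bullet> (H i *v d))\<bar>
     \<le> (\<Sum>i\<in>UNIV. \<bar>\<xi> $ i\<bar> * onorm ((*v) (H i))) * norm d ^ 2"
proof -
  have "\<bar>\<Sum>i\<in>UNIV. \<xi> $ i * (d \<bullet> (H i *v d))\<bar> \<le> (\<Sum>i\<in>UNIV. \<bar>\<xi> $ i * (d \<bullet> (H i *v d))\<bar>)"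
    by (rule sum_abs)
  also have "\<dots> \<le> (\<Sum>i\<in>UNIV. \<bar>\<xi> $ i\<bar> * onorm ((*v) (H i)) * norm d ^ 2)"
  proof (rule sum_mono)
    fix i
    have "\<bar>d \<bullet> (H i *v d)\<bar> \<le> norm d * norm (H i *v d)" by (rule Cauchy_Schwarz_ineq2)
    also have "\<dots> \<le> norm d * (onorm ((*v) (H i)) * norm d)"
      by (rule mult_left_mono[OF onorm]) auto
    finally have "\<bar>d \<bullet> (H i *v d)\<bar> \<le> onorm ((*v) (H i)) * norm d ^ 2"
      by (simp add: power2_eq_square algebra_simps)
    thus "\<bar>\<xi> $ i * (d \<bullet> (H i *v d))\<bar> \<le> \<bar>\<xi> $ i\<bar> * onorm ((*v) (H i)) * norm d ^ 2"
      by (simp add: abs_mult mult.assoc mult_left_mono)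
  qed
  also have "\<dots> = (\<Sum>i\<in>UNIV. \<bar>\<xi> $ i\<bar> * onorm ((*v) (H i))) * norm d ^ 2"
    by (simp add: sum_distrib_right)
  finally show ?thesis .
qed

lemma qM_bdd:
  assumes "finite C" "C \<noteq> {}" "M > 0"
  shows "bdd_below (range (qM Jf Hf C M x))"
proof -
  obtain \<xi>0 where x0: "\<xi>0 \<in> C" using assms by auto
  define a where "a = onorm ((*v) (Jf x)) * norm \<xi>0"
  define b where "b = 1/2 * (\<Sum>i\<in>UNIV. \<bar>\<xi>0 $ i\<bar> * onorm ((*v) (Hf x i)))"
  have a0: "a \<ge> 0" unfolding a_def by (simp add: onorm_pos_le)
  have b0: "b \<ge> 0" unfolding b_def by (auto intro!: sum_nonneg mult_nonneg_nonneg onorm_pos_le)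
  obtain m where m: "\<And>t. t \<ge> 0 \<Longrightarrow> m \<le> - a * t - b * t^2 + M/6 * t^3"
    using cubic_lb[OF a0 b0, of "M/6"] assms by auto
  show ?thesis unfolding bdd_below_def
  proof (intro exI ballI)
    fix y assume "y \<in> range (qM Jf Hf C M x)"
    then obtain d where yd: "y = qM Jf Hf C M x d" by auto
    have l: "(Jf x *v d) \<bullet> \<xi>0 \<ge> - a * norm d"
    proof -
      have "\<bar>(Jf x *v d) \<bullet> \<xi>0\<bar> \<le> norm (Jf x *v d) * norm \<xi>0" by (rule Cauchy_Schwarz_ineq2)
      also have "\<dots> \<le> (onorm ((*v) (Jf x)) * norm d) * norm \<xi>0"
        by (rule mult_right_mono[OF onorm]) auto
      finally show ?thesis unfolding a_def by (simp add: algebra_simps)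
    qed
    have q: "1/2 * (\<Sum>i\<in>UNIV. \<xi>0 $ i * (d \<bullet> (Hf x i *v d))) \<ge> - b * norm d ^ 2"
      using quad_bound[of \<xi>0 d "Hf x"] unfolding b_def by (simp add: abs_le_iff)
    have "(Jf x *v d) \<bullet> \<xi>0 + 1/2 * (\<Sum>i\<in>UNIV. \<xi>0 $ i * (d \<bullet> (Hf x i *v d)))
       \<le> Max ((\<lambda>\<xi>. (Jf x *v d) \<bullet> \<xi> + 1/2 * (\<Sum>i\<in>UNIV. \<xi> $ i * (d \<bullet> (Hf x i *v d)))) ` C)"
      using assms x0 by (intro Max_ge) auto
    hence "y \<ge> - a * norm d - b * norm d ^ 2 + M/6 * norm d ^ 3"
      using l q unfolding yd qM_def by linarith
    thus "m \<le> y" using m[of "norm d"] by simp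
  qed
qed


lemma interior_pos:
  assumes u: "u \<in> interior K" and xi: "\<xi> \<in> dual_cone K" and n: "norm \<xi> = 1"
  shows "u \<bullet> \<xi> > 0"
proof -
  obtain e where e: "e > 0" "ball u e \<subseteq> K" using u by (meson mem_interior)
  define v where "v = u - (e/2) *\<^sub>R \<xi>"
  have "dist u v = e/2" unfolding v_def dist_norm using n e by simp
  hence "v \<in> K" using e by auto
  hence "v \<bullet> \<xi> \<ge> 0" using xi unfolding dual_cone_def by (auto simp: inner_commute)
  moreover have "\<xi> \<bullet> \<xi> = 1" using n by (simp add: dot_square_norm)
  ultimately have "u \<bullet> \<xi> - e/2 \<ge> 0" unfolding v_def by (simp add: inner_diff_left)
  thus ?thesis using e by simp
qed

lemma descent:
  fixes Jf :: "real^'n::finite \<Rightarrow> real^'n^'p::finite" and Hf :: "real^'n \<Rightarrow> 'p \<Rightarrow> real^'n^'n"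
  assumes C: "finite C" "C \<noteq> {}" and M: "M > 0"
    and neg: "\<forall>\<xi>\<in>C. (Jf x *v d) \<bullet> \<xi> < 0"
  shows "\<exists>d'. qM Jf Hf C M x d' < 0"
proof -
  define L where "L = (\<lambda>\<xi>. (Jf x *v d) \<bullet> \<xi>)"
  define Q where "Q = (\<lambda>\<xi>. 1/2 * (\<Sum>i\<in>UNIV. \<xi> $ i * (d \<bullet> (Hf x i *v d))))"
  define A where "A = Max (L ` C)"
  define B where "B = Max ((\<lambda>\<xi>. \<bar>Q \<xi>\<bar>) ` C)"
  define c where "c = M/6 * norm d ^ 3"
  have A0: "A < 0" unfolding A_def using C neg L_def by (subst Max_less_iff) auto
  have LA: "\<And>\<xi>. \<xi> \<in> C \<Longrightarrow> L \<xi> \<le> A" unfolding A_def using C by auto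
  have QB: "\<And>\<xi>. \<xi> \<in> C \<Longrightarrow> Q \<xi> \<le> B" unfolding B_def using C
    by (meson Max_ge abs_ge_self finite_imageI image_eqI order_trans)
  obtain \<xi>0 where "\<xi>0 \<in> C" using C by auto
  hence B0: "B \<ge> 0" unfolding B_def using C by (meson Max_ge abs_ge_zero finite_imageI image_eqI order_trans)
  have c0: "c \<ge> 0" unfolding c_def using M by simp
  define t where "t = min 1 (- A / (2 * (B + c + 1)))"
  have "A / (2 * (B + c + 1)) < 0" by (rule divide_neg_pos) (use A0 B0 c0 in auto)
  hence t0: "t > 0" unfolding t_def by simp
  have t1: "t \<le> 1" unfolding t_def by simp
  have "t \<le> - A / (2 * (B + c + 1))" unfolding t_def by simp
  hence "t * (2*(B+c+1)) \<le> (- A / (2 * (B + c + 1))) * (2*(B+c+1))"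
    using B0 c0 by (intro mult_right_mono) auto
  also have "\<dots> = - A" using B0 c0 by simp
  finally have h: "t * (2*(B+c+1)) \<le> - A" .
  have "t * (2*(B+c+1)) = 2 * (t * (B+c+1))" by simp
  hence tb: "t * (B + c + 1) \<le> - A / 2" using h by linarith
  have key: "qM Jf Hf C M x (t *\<^sub>R d) \<le> t * A + t^2 * B + t^3 * c"
  proof -
    have "Max ((\<lambda>\<xi>. (Jf x *v (t *\<^sub>R d)) \<bullet> \<xi> + 1/2 * (\<Sum>i\<in>UNIV. \<xi> $ i * ((t *\<^sub>R d) \<bullet> (Hf x i *v (t *\<^sub>R d))))) ` C)
        \<le> t * A + t^2 * B"
    proof -
     have "\<forall>\<xi>\<in>C. (Jf x *v (t *\<^sub>R d)) \<bullet> \<xi> + 1/2 * (\<Sum>i\<in>UNIV. \<xi> $ i * ((t *\<^sub>R d) \<bullet> (Hf x i *v (t *\<^sub>R d)))) \<le> t * A + t^2 * B"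
     proof
      fix \<xi> assume xi: "\<xi> \<in> C"
      have e1: "(Jf x *v (t *\<^sub>R d)) \<bullet> \<xi> = t * L \<xi>"
        unfolding L_def by (simp add: matrix_vector_mult_scaleR)
      have e2: "1/2 * (\<Sum>i\<in>UNIV. \<xi> $ i * ((t *\<^sub>R d) \<bullet> (Hf x i *v (t *\<^sub>R d)))) = t^2 * Q \<xi>"
        unfolding Q_def by (simp add: matrix_vector_mult_scaleR sum_distrib_left power2_eq_square algebra_simps)
      have "t * L \<xi> \<le> t * A" using LA[OF xi] t0 by simp
      moreover have "t^2 * Q \<xi> \<le> t^2 * B" using QB[OF xi] by (simp add: mult_left_mono)
      ultimately show "(Jf x *v (t *\<^sub>R d)) \<bullet> \<xi> + 1/2 * (\<Sum>i\<in>UNIV. \<xi> $ i * ((t *\<^sub>R d) \<bullet> (Hf x i *v (t *\<^sub>R d)))) \<le> t * A + t^2 * B"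
        unfolding e1 e2 by linarith
     qed
     thus ?thesis using C by (subst Max_le_iff) auto
    qed
    moreover have "M / 6 * norm (t *\<^sub>R d) ^ 3 = t^3 * c"
      unfolding c_def using t0 by (simp add: power_mult_distrib)
    ultimately show ?thesis unfolding qM_def by linarith
  qed
  have "t^3 * c \<le> t^2 * c" using t0 t1 c0
    by (simp add: mult_right_mono power_decreasing)
  moreover have "t * (t*(B+c+1)) \<le> t * (- A / 2)"
    by (rule mult_left_mono[OF tb]) (use t0 in simp)
  moreover have "t * (t*(B+c+1)) = t^2*B + t^2*c + t^2"
    by (simp add: power2_eq_square algebra_simps)
  moreover have "t * (- A / 2) = - (t * A / 2)" by simp
  moreover have "t^2 \<ge> 0" by simp
  ultimately have "t * A + t^2 * B + t^3 * c \<le> t * A / 2" by linarith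
  also have "\<dots> < 0" using t0 A0 by (simp add: mult_pos_neg)
  finally show ?thesis using key by (intro exI[of _ "t *\<^sub>R d"]) linarith
qed

theorem theorem3p1:
  fixes S :: "(real^'n) set" and K :: "(real^'p) set" and C :: "(real^'p) set"
    and f :: "real^'n \<Rightarrow> real^'p"
    and Jf :: "real^'n \<Rightarrow> real^'n^'p" and Hf :: "real^'n \<Rightarrow> 'p \<Rightarrow> real^'n^'n"
    and M :: real
  assumes S: "closed S" "convex S" "interior S \<noteq> {}"
    and K: "pointed_closed_convex_cone K"
    and C: "finite C" "C \<subseteq> dual_cone K" "\<forall>\<xi>\<in>C. norm \<xi> = 1"
           "cone hull (convex hull C) = dual_cone K"
    and f1: "\<And>x. x \<in> S \<Longrightarrow> (f has_derivative (\<lambda>d. Jf x *v d)) (at x within S)"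
    and f2: "\<And>x i. x \<in> S \<Longrightarrow> ((\<lambda>y. Jf y $ i) has_derivative (\<lambda>d. Hf x i *v d)) (at x within S)"
    and f3: "\<And>i. continuous_on S (\<lambda>x. Hf x i)"
    and M: "M > 0"
  shows "(\<forall>x\<in>S. betaM Jf Hf C M x \<le> 0)
    \<and> (\<forall>xb\<in>S. \<not> stationary Jf K xb \<longrightarrow>
          betaM Jf Hf C M xb < 0
          \<and> (\<forall>dM. (\<forall>d. qM Jf Hf C M xb dM \<le> qM Jf Hf C M xb d) \<longrightarrow> dM \<noteq> 0))
    \<and> (\<forall>xb\<in>S. betaM Jf Hf C M xb = 0 \<longrightarrow> stationary Jf K xb)"
proof -
  have Cne: "C \<noteq> {}"
  proof
    assume "C = {}"
    moreover have "cone hull {} = ({} :: (real^'p) set)" by (rule hull_same) (simp add: cone_def)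
    ultimately have "dual_cone K = {}" using C(4) by simp
    moreover have "0 \<in> dual_cone K" unfolding dual_cone_def by simp
    ultimately show False by simp
  qed
  have q0: "\<And>x. qM Jf Hf C M x 0 = 0" unfolding qM_def using C(1) Cne by simp
  have le: "\<And>x d. betaM Jf Hf C M x \<le> qM Jf Hf C M x d"
    unfolding betaM_def by (rule cINF_lower[OF qM_bdd[OF C(1) Cne M]]) simp
  have ns: "\<exists>d'. qM Jf Hf C M x d' < 0" if "\<not> stationary Jf K x" for x
  proof -
    from that obtain d u where u: "u \<in> interior K" "Jf x *v d = - u"
      unfolding stationary_def by auto
    have "\<forall>\<xi>\<in>C. (Jf x *v d) \<bullet> \<xi> < 0"
      using interior_pos[OF u(1)] C(2,3) u(2) by auto
    thus ?thesis by (rule descent[OF C(1) Cne M])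
  qed
  have P2: "betaM Jf Hf C M x < 0 \<and> (\<forall>dM. (\<forall>d. qM Jf Hf C M x dM \<le> qM Jf Hf C M x d) \<longrightarrow> dM \<noteq> 0)"
    if ns0: "\<not> stationary Jf K x" for x
  proof -
    obtain d' where d': "qM Jf Hf C M x d' < 0" using ns[OF ns0] by blast
    have "betaM Jf Hf C M x < 0" using le[of x d'] d' by linarith
    moreover have "dM \<noteq> 0" if "\<forall>d. qM Jf Hf C M x dM \<le> qM Jf Hf C M x d" for dM
    proof
      assume "dM = 0"
      thus False using that d' q0[of x] by (metis not_le)
    qed
    ultimately show ?thesis by blast
  qed
  show ?thesis
  proof (intro conjI ballI impI)
    fix x show "betaM Jf Hf C M x \<le> 0" using le[of x 0] q0[of x] by simp
  next
    fix x assume "\<not> stationary Jf K x"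
    thus "betaM Jf Hf C M x < 0" using P2 by blast
  next
    fix x assume "\<not> stationary Jf K x"
    thus "\<forall>dM. (\<forall>d. qM Jf Hf C M x dM \<le> qM Jf Hf C M x d) \<longrightarrow> dM \<noteq> 0" using P2 by blast
  next
    fix x assume "betaM Jf Hf C M x = 0"
    thus "stationary Jf K x" using P2 by force
  qed
qed

end
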